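(* Let $D$ be a perfect subgroup of a group $G$, let $\pi\colon S\to G$ be a surjective group homomorphism with central kernel, and let $\tilde D$ be the smallest subgroup of $S$ with $\pi(\tilde D)=D$. Then the sandwich classification theorem holds for $L(D,G)$ if and only if it holds for $L(\tilde D,S)$, and $\pi$ induces a bijection from the set of $\tilde D$-full subgroups of $S$ onto the set of $D$-full subgroups of $G$.
   Context: A group is perfect if it equals its commutator subgroup; $X^Y$ denotes the subgroup generated by all $b^{-1}ab$, $a\in X$, $b\in Y$. $L(D,G)$ is the lattice of subgroups of $G$ containing $D$; $F\in L(D,G)$ is $D$-full if $D^F=F$. A sandwich of $L(D,G)$ is the set of all subgroups $H$ with $F\le H\le N_G(F)$ for a fixed $D$-full subgroup $F$. The lattice $L(D,G)$ satisfies the sandwich classification theorem if it is the union of its sandwiches, i.e. for every $H\in L(D,G)$ the subgroup $D^H$ is $D$-full and $H\le N_G(D^H)$. The smallest subgroup $\tilde D$ with $\pi(\tilde D)=D$ exists (it is contained in every subgroup mapping onto $D$). *)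

theory Defs
  imports "HOL-Algebra.Algebra"
begin

definition conj_gen :: "('a, 'b) monoid_scheme \<Rightarrow> 'a set \<Rightarrow> 'a set \<Rightarrow> 'a set" where
  "conj_gen G A B = generate G {inv\<^bsub>G\<^esub> b \<otimes>\<^bsub>G\<^esub> a \<otimes>\<^bsub>G\<^esub> b | a b. a \<in> A \<and> b \<in> B}"

definition perfect :: "('a, 'b) monoid_scheme \<Rightarrow> 'a set \<Rightarrow> bool" where
  "perfect G D \<longleftrightarrow> subgroup D G \<and> derived G D = D"

definition sub_lattice :: "('a, 'b) monoid_scheme \<Rightarrow> 'a set \<Rightarrow> 'a set set" where
  "sub_lattice G D = {H. subgroup H G \<and> D \<subseteq> H}"

definition full :: "('a, 'b) monoid_scheme \<Rightarrow> 'a set \<Rightarrow> 'a set \<Rightarrow> bool" where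
  "full G D F \<longleftrightarrow> F \<in> sub_lattice G D \<and> conj_gen G D F = F"

definition sandwich_classification :: "('a, 'b) monoid_scheme \<Rightarrow> 'a set \<Rightarrow> bool" where
  "sandwich_classification G D \<longleftrightarrow>
     (\<forall>H \<in> sub_lattice G D. full G D (conj_gen G D H) \<and> H \<subseteq> normalizer G (conj_gen G D H))"

end

theory Submission imports Defs begin

lemma gen_mem:
  "a \<in> A \<Longrightarrow> b \<in> B \<Longrightarrow> x = inv\<^bsub>G\<^esub> b \<otimes>\<^bsub>G\<^esub> a \<otimes>\<^bsub>G\<^esub> b \<Longrightarrow>
   x \<in> {inv\<^bsub>G\<^esub> b \<otimes>\<^bsub>G\<^esub> a \<otimes>\<^bsub>G\<^esub> b | a b. a \<in> A \<and> b \<in> B}"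
  by (intro CollectI exI conjI) assumption+

lemma (in group) cancel_aux[simp]:
  "c \<in> carrier G \<Longrightarrow> z \<in> carrier G \<Longrightarrow> c \<otimes> (inv c \<otimes> z) = z"
  "c \<in> carrier G \<Longrightarrow> z \<in> carrier G \<Longrightarrow> inv c \<otimes> (c \<otimes> z) = z"
  by (simp_all add: m_assoc[symmetric])

lemma (in group) conj_hom: "c \<in> carrier G \<Longrightarrow> (\<lambda>x. inv c \<otimes> x \<otimes> c) \<in> hom G G"
  unfolding hom_def by (auto simp: m_assoc)

lemma (in group) conj_group_hom: "c \<in> carrier G \<Longrightarrow> group_hom G G (\<lambda>x. inv c \<otimes> x \<otimes> c)"
  using conj_hom unfolding group_hom_def group_hom_axioms_def by (simp add: is_group)

lemma preimage_subgroup2: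
  assumes "group_hom A B f" "group_hom A C g" "subgroup U B" "subgroup V C"
  shows "subgroup {s \<in> carrier A. f s \<in> U \<and> g s \<in> V} A"
proof -
  interpret f: group_hom A B f by fact
  interpret g: group_hom A C g by fact
  show ?thesis
    apply (rule f.G.subgroupI)
    using assms(3,4) by (auto intro!: exI[of _ "\<one>\<^bsub>A\<^esub>"] simp: subgroup.one_closed subgroup.m_inv_closed subgroup.m_closed)
qed

lemma (in group) conj_gen_subgroup:
  assumes "A \<subseteq> carrier G" "B \<subseteq> carrier G"
  shows "subgroup (conj_gen G A B) G"
  unfolding conj_gen_def using assms by (intro generate_is_subgroup) (auto intro!: m_closed)

lemma (in group) conj_gen_closed:
  assumes "A \<subseteq> carrier G" "subgroup B G" "c \<in> B" "y \<in> conj_gen G A B"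
  shows "inv c \<otimes> y \<otimes> c \<in> conj_gen G A B"
proof -
  have cG: "c \<in> carrier G" using assms subgroup.subset by blast
  interpret h: group_hom G G "\<lambda>x. inv c \<otimes> x \<otimes> c" using conj_group_hom[OF cG] .
  let ?X = "{inv b \<otimes> a \<otimes> b | a b. a \<in> A \<and> b \<in> B}"
  have XG: "?X \<subseteq> carrier G"
  proof
    fix x assume "x \<in> ?X"
    then obtain a b where ab: "a \<in> A" "b \<in> B" "x = inv b \<otimes> a \<otimes> b" by blast
    have "b \<in> carrier G" using ab(2) assms(2) subgroup.subset by blast
    moreover have "a \<in> carrier G" using ab(1) assms(1) by blast
    ultimately show "x \<in> carrier G" using ab(3) by simp
  qed
  have sub: "(\<lambda>x. inv c \<otimes> x \<otimes> c) ` ?X \<subseteq> ?X"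
  proof
    fix z assume "z \<in> (\<lambda>x. inv c \<otimes> x \<otimes> c) ` ?X"
    then obtain x where x: "x \<in> ?X" "z = inv c \<otimes> x \<otimes> c" by (rule imageE)
    from x(1) obtain a b where ab: "a \<in> A" "b \<in> B" "x = inv b \<otimes> a \<otimes> b" by blast
    have bG: "b \<in> carrier G" using subsetD[OF subgroup.subset[OF assms(2)] ab(2)] .
    have aG: "a \<in> carrier G" using subsetD[OF assms(1) ab(1)] .
    have bc: "b \<otimes> c \<in> B" using subgroup.m_closed[OF assms(2) ab(2) assms(3)] .
    have "inv c \<otimes> (inv b \<otimes> a \<otimes> b) \<otimes> c = inv (b \<otimes> c) \<otimes> a \<otimes> (b \<otimes> c)"
      using bG aG cG by (simp add: inv_mult_group m_assoc)
    hence zeq: "z = inv (b \<otimes> c) \<otimes> a \<otimes> (b \<otimes> c)" by (simp only: x(2) ab(3))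
    show "z \<in> ?X" by (rule gen_mem[OF ab(1) bc zeq])
  qed
  have "generate G ((\<lambda>x. inv c \<otimes> x \<otimes> c) ` ?X) \<subseteq> generate G ?X"
  proof (rule generate_subgroup_incl[OF _ generate_is_subgroup[OF XG]])
    show "(\<lambda>x. inv c \<otimes> x \<otimes> c) ` ?X \<subseteq> generate G ?X"
      using sub generate.incl[of _ ?X G] by blast
  qed
  hence "(\<lambda>x. inv c \<otimes> x \<otimes> c) ` generate G ?X \<subseteq> generate G ?X"
    using h.generate_img[OF XG] by simp
  thus ?thesis using assms(4) unfolding conj_gen_def by blast
qed

lemma (in group) conj_gen_incl:
  assumes "A \<subseteq> carrier G" "subgroup B G"
  shows "A \<subseteq> conj_gen G A B"
proof
  fix a assume "a \<in> A"
  have "inv \<one> \<otimes> a \<otimes> \<one> \<in> {inv b \<otimes> a \<otimes> b | a b. a \<in> A \<and> b \<in> B}"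
    by (rule gen_mem[OF \<open>a \<in> A\<close> subgroup.one_closed[OF assms(2)] refl])
  hence "inv \<one> \<otimes> a \<otimes> \<one> \<in> generate G {inv b \<otimes> a \<otimes> b | a b. a \<in> A \<and> b \<in> B}"
    by (rule generate.incl)
  moreover have "a \<in> carrier G" using subsetD[OF assms(1) \<open>a \<in> A\<close>] .
  ultimately show "a \<in> conj_gen G A B" unfolding conj_gen_def by simp
qed

lemma (in group) conj_gen_mono:
  assumes "A \<subseteq> carrier G" "B \<subseteq> B'" "B' \<subseteq> carrier G"
  shows "conj_gen G A B \<subseteq> conj_gen G A B'"
  unfolding conj_gen_def
proof (rule mono_generate, rule subsetI)
  fix x assume "x \<in> {inv b \<otimes> a \<otimes> b |a b. a \<in> A \<and> b \<in> B}"
  then obtain a b where ab: "a \<in> A" "b \<in> B" "x = inv b \<otimes> a \<otimes> b" by blast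
  show "x \<in> {inv b \<otimes> a \<otimes> b |a b. a \<in> A \<and> b \<in> B'}"
    using ab(2) assms(2) by (intro gen_mem[OF ab(1) _ ab(3)]) blast
qed

lemma coset_img:
  "(k <#\<^bsub>G\<^esub> Y) #>\<^bsub>G\<^esub> c = (\<lambda>y. k \<otimes>\<^bsub>G\<^esub> y \<otimes>\<^bsub>G\<^esub> c) ` Y"
  unfolding l_coset_def r_coset_def by auto

lemma (in group) conj_gen_normalizer:
  assumes "A \<subseteq> carrier G" "subgroup B G"
  shows "B \<subseteq> normalizer G (conj_gen G A B)"
proof
  fix k assume k: "k \<in> B"
  have kG: "k \<in> carrier G" using subsetD[OF subgroup.subset[OF assms(2)] k] .
  let ?Y = "conj_gen G A B"
  have YG: "?Y \<subseteq> carrier G"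
    using subgroup.subset[OF conj_gen_subgroup[OF assms(1) subgroup.subset[OF assms(2)]]] .
  have ik: "inv k \<in> B" using subgroup.m_inv_closed[OF assms(2) k] .
  have "(\<lambda>y. k \<otimes> y \<otimes> inv k) ` ?Y = ?Y"
  proof (intro equalityI subsetI)
    fix z assume "z \<in> (\<lambda>y. k \<otimes> y \<otimes> inv k) ` ?Y"
    then obtain y where y: "y \<in> ?Y" "z = k \<otimes> y \<otimes> inv k" by (rule imageE)
    have "inv (inv k) \<otimes> y \<otimes> inv k \<in> ?Y" using conj_gen_closed[OF assms(1,2) ik y(1)] .
    thus "z \<in> ?Y" unfolding y(2) inv_inv[OF kG] .
  next
    fix y assume y: "y \<in> ?Y"
    have yG: "y \<in> carrier G" using subsetD[OF YG y] .
    have w: "inv k \<otimes> y \<otimes> k \<in> ?Y" using conj_gen_closed[OF assms(1,2) k y] .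
    have "y = k \<otimes> (inv k \<otimes> y \<otimes> k) \<otimes> inv k"
      using kG yG by (simp add: m_assoc)
    thus "y \<in> (\<lambda>y. k \<otimes> y \<otimes> inv k) ` ?Y" by (rule image_eqI[OF _ w])
  qed
  hence "k <# ?Y #> inv k = ?Y" by (simp only: coset_img)
  thus "k \<in> normalizer G ?Y"
    unfolding normalizer_def stabilizer_def using kG YG by simp
qed

lemma (in group) conj_gen_le:
  assumes "A \<subseteq> B" "subgroup B G"
  shows "conj_gen G A B \<subseteq> B"
  unfolding conj_gen_def
proof (rule generate_subgroup_incl[OF _ assms(2)])
  show "{inv b \<otimes> a \<otimes> b |a b. a \<in> A \<and> b \<in> B} \<subseteq> B"
    using assms by (auto intro!: subgroup.m_closed[OF assms(2)] subgroup.m_inv_closed[OF assms(2)])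
qed

lemma SC_iff:
  assumes "group G" "subgroup D G"
  shows "sandwich_classification G D \<longleftrightarrow>
    (\<forall>H \<in> sub_lattice G D. conj_gen G D (conj_gen G D H) = conj_gen G D H)"
proof -
  interpret group G by fact
  have DG: "D \<subseteq> carrier G" using assms(2) subgroup.subset by blast
  have "full G D (conj_gen G D H) \<and> H \<subseteq> normalizer G (conj_gen G D H)
        \<longleftrightarrow> conj_gen G D (conj_gen G D H) = conj_gen G D H" if H: "H \<in> sub_lattice G D" for H
  proof -
    have HS: "subgroup H G" using H unfolding sub_lattice_def by blast
    have "subgroup (conj_gen G D H) G" using conj_gen_subgroup[OF DG subgroup.subset[OF HS]] .
    moreover have "D \<subseteq> conj_gen G D H" using conj_gen_incl[OF DG HS] .
    moreover have "H \<subseteq> normalizer G (conj_gen G D H)" using conj_gen_normalizer[OF DG HS] .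
    ultimately show ?thesis unfolding full_def sub_lattice_def by blast
  qed
  thus ?thesis unfolding sandwich_classification_def by blast
qed

locale ctx = G: group G + S: group S
  for G :: "('a,'c) monoid_scheme" and S :: "('b,'d) monoid_scheme" +
  fixes \<pi> :: "'b \<Rightarrow> 'a" and D :: "'a set" and Dt :: "'b set"
  assumes hom: "\<pi> \<in> hom S G" and surj: "\<pi> ` carrier S = carrier G"
    and central: "\<forall>k \<in> kernel S G \<pi>. \<forall>s \<in> carrier S. k \<otimes>\<^bsub>S\<^esub> s = s \<otimes>\<^bsub>S\<^esub> k"
    and Dt: "subgroup Dt S" and img: "\<pi> ` Dt = D"
    and minimal: "\<forall>T. subgroup T S \<and> \<pi> ` T = D \<longrightarrow> Dt \<subseteq> T"
begin

lemma gh: "group_hom S G \<pi>"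
  unfolding group_hom_def group_hom_axioms_def using hom G.is_group S.is_group by simp

abbreviation pre :: "'a set \<Rightarrow> 'b set" where "pre E \<equiv> {s \<in> carrier S. \<pi> s \<in> E}"

lemma DtS: "Dt \<subseteq> carrier S" using Dt subgroup.subset by blast

lemma DG: "subgroup D G" using group_hom.subgroup_img_is_subgroup[OF gh Dt] img by simp

lemma DGc: "D \<subseteq> carrier G" using DG subgroup.subset by blast

lemma pre_sub: "subgroup E G \<Longrightarrow> subgroup (pre E) S"
  using preimage_subgroup2[OF gh gh, of E E] by simp

lemma pre_img: "E \<subseteq> carrier G \<Longrightarrow> \<pi> ` pre E = E"
proof
  assume E: "E \<subseteq> carrier G"
  show "E \<subseteq> \<pi> ` pre E"
  proof
    fix e assume "e \<in> E"
    then obtain s where "s \<in> carrier S" "e = \<pi> s" using E surj by blast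
    thus "e \<in> \<pi> ` pre E" using \<open>e \<in> E\<close> by blast
  qed
qed auto

lemma img_conj:
  assumes "A \<subseteq> carrier S" "B \<subseteq> carrier S"
  shows "\<pi> ` conj_gen S A B = conj_gen G (\<pi> ` A) (\<pi> ` B)"
proof -
  let ?X = "{inv\<^bsub>S\<^esub> b \<otimes>\<^bsub>S\<^esub> a \<otimes>\<^bsub>S\<^esub> b | a b. a \<in> A \<and> b \<in> B}"
  have XS: "?X \<subseteq> carrier S" using assms by (auto intro!: S.m_closed)
  have eq: "\<pi> ` ?X = {inv\<^bsub>G\<^esub> b \<otimes>\<^bsub>G\<^esub> a \<otimes>\<^bsub>G\<^esub> b | a b. a \<in> \<pi> ` A \<and> b \<in> \<pi> ` B}"
  proof (intro equalityI subsetI)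
    fix z assume "z \<in> \<pi> ` ?X"
    then obtain a b where ab: "a \<in> A" "b \<in> B" "z = \<pi> (inv\<^bsub>S\<^esub> b \<otimes>\<^bsub>S\<^esub> a \<otimes>\<^bsub>S\<^esub> b)" by blast
    have "z = inv\<^bsub>G\<^esub> \<pi> b \<otimes>\<^bsub>G\<^esub> \<pi> a \<otimes>\<^bsub>G\<^esub> \<pi> b"
      using ab assms gh by (simp add: subsetD group_hom.hom_mult group_hom.hom_inv)
    thus "z \<in> {inv\<^bsub>G\<^esub> b \<otimes>\<^bsub>G\<^esub> a \<otimes>\<^bsub>G\<^esub> b | a b. a \<in> \<pi> ` A \<and> b \<in> \<pi> ` B}"
      by (rule gen_mem[OF imageI[OF ab(1)] imageI[OF ab(2)]])
  next
    fix z assume "z \<in> {inv\<^bsub>G\<^esub> b \<otimes>\<^bsub>G\<^esub> a \<otimes>\<^bsub>G\<^esub> b | a b. a \<in> \<pi> ` A \<and> b \<in> \<pi> ` B}"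
    then obtain a b where ab: "a \<in> A" "b \<in> B" "z = inv\<^bsub>G\<^esub> \<pi> b \<otimes>\<^bsub>G\<^esub> \<pi> a \<otimes>\<^bsub>G\<^esub> \<pi> b" by blast
    have "z = \<pi> (inv\<^bsub>S\<^esub> b \<otimes>\<^bsub>S\<^esub> a \<otimes>\<^bsub>S\<^esub> b)"
      using ab assms gh by (simp add: subsetD group_hom.hom_mult group_hom.hom_inv)
    thus "z \<in> \<pi> ` ?X" by (rule image_eqI[OF _ gen_mem[OF ab(1) ab(2) refl]])
  qed
  show ?thesis unfolding conj_gen_def
    using group_hom.generate_img[OF gh XS] eq by simp
qed

lemma central_conj:
  assumes "z \<in> kernel S G \<pi>" "x \<in> carrier S"
  shows "inv\<^bsub>S\<^esub> z \<otimes>\<^bsub>S\<^esub> x \<otimes>\<^bsub>S\<^esub> z = x"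
proof -
  have zS: "z \<in> carrier S" using assms unfolding kernel_def by blast
  have "x \<otimes>\<^bsub>S\<^esub> z = z \<otimes>\<^bsub>S\<^esub> x" using central assms by metis
  thus ?thesis using zS assms by (simp add: S.m_assoc)
qed

lemma conj_pre:
  assumes B: "B \<subseteq> carrier S"
  shows "conj_gen S Dt (pre (\<pi> ` B)) = conj_gen S Dt B"
proof -
  have "{inv\<^bsub>S\<^esub> b \<otimes>\<^bsub>S\<^esub> a \<otimes>\<^bsub>S\<^esub> b | a b. a \<in> Dt \<and> b \<in> pre (\<pi> ` B)}
      = {inv\<^bsub>S\<^esub> b \<otimes>\<^bsub>S\<^esub> a \<otimes>\<^bsub>S\<^esub> b | a b. a \<in> Dt \<and> b \<in> B}"
  proof (intro equalityI subsetI)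
    fix w assume "w \<in> {inv\<^bsub>S\<^esub> b \<otimes>\<^bsub>S\<^esub> a \<otimes>\<^bsub>S\<^esub> b | a b. a \<in> Dt \<and> b \<in> pre (\<pi> ` B)}"
    then obtain d b' where db: "d \<in> Dt" "b' \<in> carrier S" "\<pi> b' \<in> \<pi> ` B"
      "w = inv\<^bsub>S\<^esub> b' \<otimes>\<^bsub>S\<^esub> d \<otimes>\<^bsub>S\<^esub> b'" by blast
    then obtain b where b: "b \<in> B" "\<pi> b' = \<pi> b" by blast
    have bS: "b \<in> carrier S" using b B by blast
    have dS: "d \<in> carrier S" using db DtS by blast
    define z where "z = inv\<^bsub>S\<^esub> b \<otimes>\<^bsub>S\<^esub> b'"
    have zS: "z \<in> carrier S" unfolding z_def using bS db by simp
    have "\<pi> z = \<one>\<^bsub>G\<^esub>" unfolding z_def using bS db b gh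
      by (simp add: group_hom.hom_mult group_hom.hom_inv group_hom.hom_closed[OF gh])
    hence zk: "z \<in> kernel S G \<pi>" using zS unfolding kernel_def by simp
    have b'eq: "b' = b \<otimes>\<^bsub>S\<^esub> z" unfolding z_def using bS db by simp
    have "w = inv\<^bsub>S\<^esub> z \<otimes>\<^bsub>S\<^esub> (inv\<^bsub>S\<^esub> b \<otimes>\<^bsub>S\<^esub> d \<otimes>\<^bsub>S\<^esub> b) \<otimes>\<^bsub>S\<^esub> z"
      unfolding db(4) b'eq using bS zS dS by (simp only: S.inv_mult_group[OF bS zS]) (simp add: S.m_assoc)
    also have "\<dots> = inv\<^bsub>S\<^esub> b \<otimes>\<^bsub>S\<^esub> d \<otimes>\<^bsub>S\<^esub> b"
      using central_conj[OF zk] bS dS by simp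
    finally show "w \<in> {inv\<^bsub>S\<^esub> b \<otimes>\<^bsub>S\<^esub> a \<otimes>\<^bsub>S\<^esub> b | a b. a \<in> Dt \<and> b \<in> B}"
      by (rule gen_mem[OF db(1) b(1)])
  next
    fix w assume "w \<in> {inv\<^bsub>S\<^esub> b \<otimes>\<^bsub>S\<^esub> a \<otimes>\<^bsub>S\<^esub> b | a b. a \<in> Dt \<and> b \<in> B}"
    then obtain d b where db: "d \<in> Dt" "b \<in> B" "w = inv\<^bsub>S\<^esub> b \<otimes>\<^bsub>S\<^esub> d \<otimes>\<^bsub>S\<^esub> b" by blast
    have "b \<in> pre (\<pi> ` B)" using db(2) B by blast
    thus "w \<in> {inv\<^bsub>S\<^esub> b \<otimes>\<^bsub>S\<^esub> a \<otimes>\<^bsub>S\<^esub> b | a b. a \<in> Dt \<and> b \<in> pre (\<pi> ` B)}"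
      by (rule gen_mem[OF db(1) _ db(3)])
  qed
  thus ?thesis unfolding conj_gen_def by simp
qed

lemma L3:
  assumes X: "subgroup Y S" and k: "k \<in> carrier S"
    and hyp: "\<forall>e\<in>D. inv\<^bsub>G\<^esub> \<pi> k \<otimes>\<^bsub>G\<^esub> e \<otimes>\<^bsub>G\<^esub> \<pi> k \<in> \<pi> ` Y"
    and d: "d \<in> Dt"
  shows "inv\<^bsub>S\<^esub> k \<otimes>\<^bsub>S\<^esub> d \<otimes>\<^bsub>S\<^esub> k \<in> Y"
proof -
  let ?T = "{s \<in> carrier S. \<pi> s \<in> D \<and> (\<lambda>x. inv\<^bsub>S\<^esub> k \<otimes>\<^bsub>S\<^esub> x \<otimes>\<^bsub>S\<^esub> k) s \<in> Y}"
  have T: "subgroup ?T S" using preimage_subgroup2[OF gh S.conj_group_hom[OF k] DG X] .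
  have kG: "\<pi> k \<in> carrier G" using k group_hom.hom_closed[OF gh] by blast
  have "\<pi> ` ?T = D"
  proof (intro equalityI subsetI)
    fix e assume e: "e \<in> D"
    have eG: "e \<in> carrier G" using e DGc by blast
    obtain x where x: "x \<in> Y" "\<pi> x = inv\<^bsub>G\<^esub> \<pi> k \<otimes>\<^bsub>G\<^esub> e \<otimes>\<^bsub>G\<^esub> \<pi> k"
      using hyp e by (metis imageE)
    have xS: "x \<in> carrier S" using x X subgroup.subset by blast
    define s where "s = k \<otimes>\<^bsub>S\<^esub> x \<otimes>\<^bsub>S\<^esub> inv\<^bsub>S\<^esub> k"
    have sS: "s \<in> carrier S" unfolding s_def using k xS by simp
    have "\<pi> s = \<pi> k \<otimes>\<^bsub>G\<^esub> \<pi> x \<otimes>\<^bsub>G\<^esub> inv\<^bsub>G\<^esub> \<pi> k"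
      unfolding s_def using k xS gh by (simp add: group_hom.hom_mult group_hom.hom_inv)
    also have "\<dots> = e" using x(2) kG eG by (simp add: G.m_assoc)
    finally have ps: "\<pi> s = e" .
    have "inv\<^bsub>S\<^esub> k \<otimes>\<^bsub>S\<^esub> s \<otimes>\<^bsub>S\<^esub> k = x"
      unfolding s_def using k xS by (simp add: S.m_assoc)
    hence "s \<in> ?T" using sS ps e x(1) by simp
    thus "e \<in> \<pi> ` ?T" using ps by blast
  qed auto
  hence "Dt \<subseteq> ?T" using minimal T by blast
  thus ?thesis using d by blast
qed


lemma full_img:
  assumes F: "full S Dt F"
  shows "full G D (\<pi> ` F)"
proof -
  have FS: "subgroup F S" and DtF: "Dt \<subseteq> F" and eq: "conj_gen S Dt F = F"
    using F unfolding full_def sub_lattice_def by auto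
  have FSc: "F \<subseteq> carrier S" using FS subgroup.subset by blast
  have "subgroup (\<pi> ` F) G" using group_hom.subgroup_img_is_subgroup[OF gh FS] .
  moreover have "D \<subseteq> \<pi> ` F" using DtF img by blast
  moreover have "conj_gen G D (\<pi> ` F) = \<pi> ` F"
    using img_conj[OF DtS FSc] img eq by simp
  ultimately show ?thesis unfolding full_def sub_lattice_def by blast
qed

lemma full_inj:
  assumes "full S Dt F1" "full S Dt F2" "\<pi> ` F1 = \<pi> ` F2"
  shows "F1 = F2"
proof -
  have F1: "conj_gen S Dt F1 = F1" "F1 \<subseteq> carrier S"
    using assms(1) subgroup.subset unfolding full_def sub_lattice_def by auto
  have F2: "conj_gen S Dt F2 = F2" "F2 \<subseteq> carrier S"
    using assms(2) subgroup.subset unfolding full_def sub_lattice_def by auto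
  have "F1 = conj_gen S Dt (pre (\<pi> ` F1))" using conj_pre[OF F1(2)] F1(1) by simp
  also have "\<dots> = conj_gen S Dt (pre (\<pi> ` F2))" using assms(3) by simp
  also have "\<dots> = F2" using conj_pre[OF F2(2)] F2(1) by simp
  finally show ?thesis .
qed

lemma full_surj:
  assumes E: "full G D E"
  shows "\<exists>F. full S Dt F \<and> \<pi> ` F = E"
proof -
  have ES: "subgroup E G" and DE: "D \<subseteq> E" and eq: "conj_gen G D E = E"
    using E unfolding full_def sub_lattice_def by auto
  have ESc: "E \<subseteq> carrier G" using ES subgroup.subset by blast
  have Psub: "subgroup (pre E) S" using pre_sub[OF ES] .
  have PSc: "pre E \<subseteq> carrier S" by blast
  define F where "F = conj_gen S Dt (pre E)"
  have img1: "\<pi> ` F = E"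
    unfolding F_def using img_conj[OF DtS PSc] img pre_img[OF ESc] eq by simp
  have Fsub: "subgroup F S" unfolding F_def using S.conj_gen_subgroup[OF DtS PSc] .
  have FSc: "F \<subseteq> carrier S" using Fsub subgroup.subset by blast
  have DtF: "Dt \<subseteq> F" unfolding F_def using S.conj_gen_incl[OF DtS Psub] .
  have "conj_gen S Dt F = F"
    using conj_pre[OF FSc] img1 unfolding F_def by simp
  hence "full S Dt F" using Fsub DtF unfolding full_def sub_lattice_def by blast
  thus ?thesis using img1 by blast
qed

lemma bij: "bij_betw (\<lambda>F. \<pi> ` F) {F. full S Dt F} {F. full G D F}"
proof -
  have "inj_on (\<lambda>F. \<pi> ` F) {F. full S Dt F}"
    unfolding inj_on_def using full_inj by simp
  moreover have "(\<lambda>F. \<pi> ` F) ` {F. full S Dt F} = {F. full G D F}"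
  proof (intro equalityI subsetI)
    fix E assume "E \<in> (\<lambda>F. \<pi> ` F) ` {F. full S Dt F}"
    then obtain F where "full S Dt F" "E = \<pi> ` F" by blast
    thus "E \<in> {F. full G D F}" using full_img by simp
  next
    fix E assume "E \<in> {F. full G D F}"
    then obtain F where "full S Dt F" "\<pi> ` F = E" using full_surj by blast
    thus "E \<in> (\<lambda>F. \<pi> ` F) ` {F. full S Dt F}" by blast
  qed
  ultimately show ?thesis unfolding bij_betw_def by blast
qed

lemma SC1:
  assumes SC: "sandwich_classification S Dt"
  shows "sandwich_classification G D"
proof -
  have SCS: "\<forall>H \<in> sub_lattice S Dt. conj_gen S Dt (conj_gen S Dt H) = conj_gen S Dt H"
    using SC SC_iff[OF S.is_group Dt] by blast
  have "conj_gen G D (conj_gen G D H) = conj_gen G D H" if H: "H \<in> sub_lattice G D" for H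
  proof -
    have HS: "subgroup H G" and DH: "D \<subseteq> H" using H unfolding sub_lattice_def by auto
    have HSc: "H \<subseteq> carrier G" using HS subgroup.subset by blast
    have Ksub: "subgroup (pre H) S" using pre_sub[OF HS] .
    have "Dt \<subseteq> pre H" using DtS img DH by blast
    hence "pre H \<in> sub_lattice S Dt" using Ksub unfolding sub_lattice_def by blast
    hence eq: "conj_gen S Dt (conj_gen S Dt (pre H)) = conj_gen S Dt (pre H)" using SCS by blast
    have KSc: "pre H \<subseteq> carrier S" by blast
    let ?Y = "conj_gen S Dt (pre H)"
    have YSc: "?Y \<subseteq> carrier S"
      using S.conj_gen_subgroup[OF DtS KSc] subgroup.subset by blast
    have piY: "\<pi> ` ?Y = conj_gen G D H"
      using img_conj[OF DtS KSc] img pre_img[OF HSc] by simp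
    have "\<pi> ` conj_gen S Dt ?Y = conj_gen G D (\<pi> ` ?Y)"
      using img_conj[OF DtS YSc] img by simp
    thus ?thesis using eq piY by simp
  qed
  thus ?thesis using SC_iff[OF G.is_group DG] by blast
qed

lemma SC2:
  assumes SC: "sandwich_classification G D"
  shows "sandwich_classification S Dt"
proof -
  have SCG: "\<forall>H \<in> sub_lattice G D. conj_gen G D (conj_gen G D H) = conj_gen G D H"
    using SC SC_iff[OF G.is_group DG] by blast
  have "conj_gen S Dt (conj_gen S Dt Ht) = conj_gen S Dt Ht" if Ht: "Ht \<in> sub_lattice S Dt" for Ht
  proof -
    have HtS: "subgroup Ht S" and DtH: "Dt \<subseteq> Ht" using Ht unfolding sub_lattice_def by auto
    have HtSc: "Ht \<subseteq> carrier S" using HtS subgroup.subset by blast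
    define H where "H = \<pi> ` Ht"
    have HS: "subgroup H G" unfolding H_def using group_hom.subgroup_img_is_subgroup[OF gh HtS] .
    have HSc: "H \<subseteq> carrier G" using HS subgroup.subset by blast
    have DH: "D \<subseteq> H" unfolding H_def using DtH img by blast
    define E where "E = conj_gen G D H"
    have fullE: "conj_gen G D E = E" unfolding E_def using SCG HS DH unfolding sub_lattice_def by blast
    have EH: "E \<subseteq> H" unfolding E_def using G.conj_gen_le[OF DH HS] .
    have ESc: "E \<subseteq> carrier G" using EH HSc by blast
    define Y where "Y = conj_gen S Dt Ht"
    have Ysub: "subgroup Y S" unfolding Y_def using S.conj_gen_subgroup[OF DtS HtSc] .
    have YSc: "Y \<subseteq> carrier S" using Ysub subgroup.subset by blast
    have Yeq: "Y = conj_gen S Dt (pre H)" unfolding Y_def H_def using conj_pre[OF HtSc] by simp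
    have piY: "\<pi> ` Y = E" unfolding Y_def E_def H_def using img_conj[OF DtS HtSc] img by simp
    define XX where "XX = conj_gen S Dt (pre E)"
    have PESc: "pre E \<subseteq> carrier S" by blast
    have Xsub: "subgroup XX S" unfolding XX_def using S.conj_gen_subgroup[OF DtS PESc] .
    have piX: "\<pi> ` XX = E" unfolding XX_def using img_conj[OF DtS PESc] img pre_img[OF ESc] fullE by simp
    have XY1: "conj_gen S Dt Y = XX" unfolding XX_def using conj_pre[OF YSc] piY by simp
    have "XX \<subseteq> Y" unfolding XX_def Yeq using S.conj_gen_mono[OF DtS, of "pre E" "pre H"] EH by blast
    moreover have "Y \<subseteq> XX"
      unfolding Yeq conj_gen_def
    proof (rule S.generate_subgroup_incl[OF _ Xsub])
      show "{inv\<^bsub>S\<^esub> b \<otimes>\<^bsub>S\<^esub> a \<otimes>\<^bsub>S\<^esub> b |a b. a \<in> Dt \<and> b \<in> pre H} \<subseteq> XX"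
      proof
        fix w assume "w \<in> {inv\<^bsub>S\<^esub> b \<otimes>\<^bsub>S\<^esub> a \<otimes>\<^bsub>S\<^esub> b |a b. a \<in> Dt \<and> b \<in> pre H}"
        then obtain d k where dk: "d \<in> Dt" "k \<in> carrier S" "\<pi> k \<in> H"
          "w = inv\<^bsub>S\<^esub> k \<otimes>\<^bsub>S\<^esub> d \<otimes>\<^bsub>S\<^esub> k" by blast
        have "\<forall>e\<in>D. inv\<^bsub>G\<^esub> \<pi> k \<otimes>\<^bsub>G\<^esub> e \<otimes>\<^bsub>G\<^esub> \<pi> k \<in> \<pi> ` XX"
        proof
          fix e assume e: "e \<in> D"
          have "inv\<^bsub>G\<^esub> \<pi> k \<otimes>\<^bsub>G\<^esub> e \<otimes>\<^bsub>G\<^esub> \<pi> k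
             \<in> {inv\<^bsub>G\<^esub> b \<otimes>\<^bsub>G\<^esub> a \<otimes>\<^bsub>G\<^esub> b |a b. a \<in> D \<and> b \<in> H}"
            by (rule gen_mem[OF e dk(3) refl])
          hence "inv\<^bsub>G\<^esub> \<pi> k \<otimes>\<^bsub>G\<^esub> e \<otimes>\<^bsub>G\<^esub> \<pi> k \<in> E"
            unfolding E_def conj_gen_def by (rule generate.incl)
          thus "inv\<^bsub>G\<^esub> \<pi> k \<otimes>\<^bsub>G\<^esub> e \<otimes>\<^bsub>G\<^esub> \<pi> k \<in> \<pi> ` XX" using piX by simp
        qed
        thus "w \<in> XX" using L3[OF Xsub dk(2) _ dk(1)] dk(4) by simp
      qed
    qed
    ultimately have "XX = Y" by blast
    thus ?thesis using XY1 unfolding Y_def by simp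
  qed
  thus ?thesis using SC_iff[OF S.is_group Dt] by blast
qed

end

theorem lemma2p4:
  fixes G :: "('a, 'c) monoid_scheme" and S :: "('b, 'd) monoid_scheme"
    and \<pi> :: "'b \<Rightarrow> 'a" and D :: "'a set" and Dt :: "'b set"
  assumes "group G" and "group S"
    and "perfect G D"
    and "\<pi> \<in> hom S G" and "\<pi> ` carrier S = carrier G"
    and "\<forall>k \<in> kernel S G \<pi>. \<forall>s \<in> carrier S. k \<otimes>\<^bsub>S\<^esub> s = s \<otimes>\<^bsub>S\<^esub> k"
    and "subgroup Dt S" and "\<pi> ` Dt = D"
    and "\<forall>T. subgroup T S \<and> \<pi> ` T = D \<longrightarrow> Dt \<subseteq> T"
  shows "(sandwich_classification G D \<longleftrightarrow> sandwich_classification S Dt)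
     \<and> bij_betw (\<lambda>F. \<pi> ` F) {F. full S Dt F} {F. full G D F}"
proof -
  interpret ctx G S \<pi> D Dt
    using assms unfolding ctx_def ctx_axioms_def by blast
  show ?thesis using SC1 SC2 bij by blast
qed

end
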